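(* Let $k\ge 3$ be an integer. Then the $(6k^2-6k-1)$-fan $F_{6k^2-6k-1}$ satisfies $\mathrm{ecrw}(F_{6k^2-6k-1})\ge k$.
   Context: The $n$-fan $F_n$ is the graph obtained from the path on $n$ vertices by adding one new vertex adjacent to all vertices of the path. A tree-cut decomposition of a graph $G$ is a pair $\mathcal{T}=(T,\{X_t\}_{t\in V(T)})$ where $T$ is a tree and the bags $X_t\subseteq V(G)$ are pairwise disjoint (possibly empty) with $\bigcup_{t\in V(T)}X_t=V(G)$. For a node $t$ of $T$, let $T_1,\dots,T_m$ be the connected components of $T-t$ and $Z_i=\bigcup_{s\in V(T_i)}X_s$; $\mathrm{cross}_{\mathcal{T}}(t)$ is the number of edges of $G$ whose two endpoints lie in two distinct sets among $Z_1,\dots,Z_m$ (if $T$ has one node, $\mathrm{cross}_{\mathcal T}(t)=0$). The crossing number of $\mathcal{T}$ is $\max_{t}\mathrm{cross}_{\mathcal{T}}(t)$, and the thickness of $\mathcal{T}$ is $\max_t|X_t|$. The edge-crossing width of $\mathcal T$ is the maximum of its crossing number and its thickness, and $\mathrm{ecrw}(G)$ is the minimum edge-crossing width over all tree-cut decompositions of $G$. *)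

theory Defs
  imports Main
begin

text \<open>Graphs are pairs (V, E) with E a set of 2-element subsets of V.\<close>

definition fan :: "nat \<Rightarrow> nat set \<times> nat set set" where
  "fan n = ({0..n},
            {{i, Suc i} | i. 1 \<le> i \<and> i < n} \<union> {{0, i} | i. 1 \<le> i \<and> i \<le> n})"

definition adj_rel :: "'b set set \<Rightarrow> ('b \<times> 'b) set" where
  "adj_rel ET = {(x, y). {x, y} \<in> ET \<and> x \<noteq> y}"

definition connected_on :: "'b set \<Rightarrow> 'b set set \<Rightarrow> bool" where
  "connected_on N ET = (\<forall>x\<in>N. \<forall>y\<in>N. (x, y) \<in> (adj_rel ET)\<^sup>*)"

text \<open>A (finite) tree: nonempty, connected, and acyclic (no edge lies on a cycle,
  i.e. deleting any edge disconnects it).\<close>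
definition is_tree :: "'b set \<Rightarrow> 'b set set \<Rightarrow> bool" where
  "is_tree N ET =
     (finite N \<and> N \<noteq> {} \<and>
      (\<forall>e\<in>ET. \<exists>x y. e = {x, y} \<and> x \<noteq> y \<and> x \<in> N \<and> y \<in> N) \<and>
      connected_on N ET \<and>
      (\<forall>e\<in>ET. \<not> connected_on N (ET - {e})))"

definition same_comp :: "'b set \<Rightarrow> 'b set set \<Rightarrow> 'b \<Rightarrow> 'b \<Rightarrow> 'b \<Rightarrow> bool" where
  "same_comp N ET t s s' =
     (s \<in> N - {t} \<and> s' \<in> N - {t} \<and> (s, s') \<in> (adj_rel {e \<in> ET. t \<notin> e})\<^sup>*)"

definition is_tcd :: "'a set \<times> 'a set set \<Rightarrow> 'b set \<Rightarrow> 'b set set \<Rightarrow> ('b \<Rightarrow> 'a set) \<Rightarrow> bool" where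
  "is_tcd G N ET X =
     (is_tree N ET \<and> (\<forall>t\<in>N. X t \<subseteq> fst G) \<and>
      (\<forall>t\<in>N. \<forall>t'\<in>N. t \<noteq> t' \<longrightarrow> X t \<inter> X t' = {}) \<and>
      (\<Union>t\<in>N. X t) = fst G)"

definition cross :: "'a set \<times> 'a set set \<Rightarrow> 'b set \<Rightarrow> 'b set set \<Rightarrow> ('b \<Rightarrow> 'a set) \<Rightarrow> 'b \<Rightarrow> nat" where
  "cross G N ET X t =
     card {e \<in> snd G. \<exists>u v s s'. e = {u, v} \<and> s \<in> N - {t} \<and> s' \<in> N - {t} \<and>
                        u \<in> X s \<and> v \<in> X s' \<and> \<not> same_comp N ET t s s'}"

definition ec_width :: "'a set \<times> 'a set set \<Rightarrow> 'b set \<Rightarrow> 'b set set \<Rightarrow> ('b \<Rightarrow> 'a set) \<Rightarrow> nat" where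
  "ec_width G N ET X = Max ((\<lambda>t. max (cross G N ET X t) (card (X t))) ` N)"

text \<open>Edge-crossing width; tree nodes are taken to be natural numbers (any finite tree
  can be relabelled).\<close>
definition ecrw :: "'a set \<times> 'a set set \<Rightarrow> nat" where
  "ecrw G = Inf {w. \<exists>(N :: nat set) ET X. is_tcd G N ET X \<and> w = ec_width G N ET X}"

end

theory Submission
  imports Defs
begin

lemma adj_sym: "sym (adj_rel A)"
proof (rule symI)
  fix x y assume "(x,y) \<in> adj_rel A"
  then have "{x,y} \<in> A" "x \<noteq> y" unfolding adj_rel_def by simp_all
  moreover have "{y,x} = {x,y}" by (rule insert_commute)
  ultimately show "(y,x) \<in> adj_rel A" unfolding adj_rel_def by simp
qed

lemma adj_star_sym: "(x,y) \<in> (adj_rel A)\<^sup>* \<Longrightarrow> (y,x) \<in> (adj_rel A)\<^sup>*"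
  by (rule symD[OF sym_rtrancl[OF adj_sym]])

lemma adj_mono: "A \<subseteq> B \<Longrightarrow> adj_rel A \<subseteq> adj_rel B"
  unfolding adj_rel_def by auto

lemma adj_star_mono: "A \<subseteq> B \<Longrightarrow> (x,y) \<in> (adj_rel A)\<^sup>* \<Longrightarrow> (x,y) \<in> (adj_rel B)\<^sup>*"
  using rtrancl_mono[OF adj_mono] by blast

lemma same_comp_refl: "s \<in> N - {t} \<Longrightarrow> same_comp N ET t s s"
  unfolding same_comp_def by auto
lemma same_comp_sym: "same_comp N ET t s s' \<Longrightarrow> same_comp N ET t s' s"
  unfolding same_comp_def using adj_star_sym[of s s' "{e \<in> ET. t \<notin> e}"] by simp
lemma same_comp_trans: "same_comp N ET t s s' \<Longrightarrow> same_comp N ET t s' s'' \<Longrightarrow> same_comp N ET t s s''"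
  unfolding same_comp_def using rtrancl_trans[of s s' _ s''] by simp

lemma exists_nbr:
  assumes "(r,z) \<in> (adj_rel ET)\<^sup>*"
  shows "z = r \<or> (\<exists>c. {r,c} \<in> ET \<and> c \<noteq> r \<and> (c,z) \<in> (adj_rel {e\<in>ET. r \<notin> e})\<^sup>*)"
  using assms
proof (induction rule: rtrancl_induct)
  case base then show ?case by simp
next
  case (step y z)
  from step.hyps(2) have yz: "{y,z} \<in> ET" "y \<noteq> z" unfolding adj_rel_def by auto
  show ?case
  proof (cases "z = r")
    case True then show ?thesis by simp
  next
    case zr: False
    show ?thesis
    proof (cases "y = r")
      case True
      then show ?thesis using yz zr by (intro disjI2 exI[of _ z]) auto
    next
      case False
      with step.IH obtain c where c: "{r,c} \<in> ET" "c \<noteq> r" "(c,y) \<in> (adj_rel {e\<in>ET. r \<notin> e})\<^sup>*" by auto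
      have "(y,z) \<in> adj_rel {e\<in>ET. r \<notin> e}" using yz zr False unfolding adj_rel_def by auto
      with c show ?thesis by (meson rtrancl.rtrancl_into_rtrancl)
    qed
  qed
qed

lemma sep:
  assumes tree: "is_tree N ET" and e: "{r,c} \<in> ET" and cr: "c \<noteq> r"
    and sc: "same_comp N ET r c s" and sc2: "same_comp N ET c s r"
  shows False
proof -
  let ?E = "ET - {{r,c}}"
  have s1: "{e\<in>ET. r \<notin> e} \<subseteq> ?E" by auto
  have s2: "{e\<in>ET. c \<notin> e} \<subseteq> ?E" by auto
  have "(c,s) \<in> (adj_rel ?E)\<^sup>*" using sc adj_star_mono[OF s1] unfolding same_comp_def by blast
  moreover have "(s,r) \<in> (adj_rel ?E)\<^sup>*" using sc2 adj_star_mono[OF s2] unfolding same_comp_def by blast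
  ultimately have cr': "(c,r) \<in> (adj_rel ?E)\<^sup>*" by (rule rtrancl_trans)
  then have rc': "(r,c) \<in> (adj_rel ?E)\<^sup>*" by (rule adj_star_sym)
  have sub: "adj_rel ET \<subseteq> (adj_rel ?E)\<^sup>*"
  proof
    fix p assume "p \<in> adj_rel ET"
    then obtain x y where p: "p = (x,y)" "{x,y} \<in> ET" "x \<noteq> y" unfolding adj_rel_def by auto
    show "p \<in> (adj_rel ?E)\<^sup>*"
    proof (cases "{x,y} = {r,c}")
      case True
      then have "(x = r \<and> y = c) \<or> (x = c \<and> y = r)" using p(3) by (auto simp: doubleton_eq_iff)
      then show ?thesis using p cr' rc' by auto
    next
      case False
      then have "(x,y) \<in> adj_rel ?E" using p unfolding adj_rel_def by auto
      then show ?thesis using p by auto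
    qed
  qed
  have "(adj_rel ET)\<^sup>* \<subseteq> (adj_rel ?E)\<^sup>*"
    using rtrancl_subset_rtrancl[OF sub] .
  then have "connected_on N ?E" using tree unfolding is_tree_def connected_on_def by blast
  then show False using tree e unfolding is_tree_def by blast
qed

lemma main:
  fixes k n :: nat and N :: "'b set" and ET X
  assumes k3: "k \<ge> 3" and nbig: "(2*k-2)*(2*k-1) \<le> n"
    and tcd: "is_tcd (fan n) N ET X"
    and thick: "\<And>t. t \<in> N \<Longrightarrow> card (X t) \<le> k - 1"
    and crs: "\<And>t. t \<in> N \<Longrightarrow> cross (fan n) N ET X t \<le> k - 1"
  shows False
proof -
  define E where "E = snd (fan n)"
  have E: "E = {{i, Suc i} | i. 1 \<le> i \<and> i < n} \<union> {{0, i} | i. 1 \<le> i \<and> i \<le> n}"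
    unfolding E_def fan_def by simp
  have tree: "is_tree N ET" using tcd unfolding is_tcd_def by blast
  have Xsub: "\<And>t. t\<in>N \<Longrightarrow> X t \<subseteq> {0..n}" using tcd unfolding is_tcd_def fan_def by auto
  have cover: "\<And>v. v \<le> n \<Longrightarrow> \<exists>t\<in>N. v \<in> X t" using tcd unfolding is_tcd_def fan_def by auto
  have finX: "\<And>t. t\<in>N \<Longrightarrow> finite (X t)" using Xsub finite_subset by blast
  have finE: "finite E"
  proof -
    have "E \<subseteq> Pow {0..n}" unfolding E by auto
    then show ?thesis by (rule finite_subset) simp
  qed
  obtain r where r: "r \<in> N" "0 \<in> X r" using cover[of 0] by auto
  define CR where "CR t = {e \<in> E. \<exists>u v s s'. e = {u, v} \<and> s \<in> N - {t} \<and> s' \<in> N - {t} \<and> u \<in> X s \<and> v \<in> X s' \<and> \<not> same_comp N ET t s s'}" for t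
  have crossCR: "cross (fan n) N ET X t = card (CR t)" for t unfolding cross_def CR_def E_def by simp
  have finCR: "finite (CR t)" for t unfolding CR_def using finE by simp
  define A where "A t = {v \<in> {1..n}. \<exists>s. s \<in> N - {t} \<and> v \<in> X s \<and> \<not> same_comp N ET t s r}" for t
  have cardA: "card (A t) \<le> k - 1" if "t \<in> N" "t \<noteq> r" for t
  proof -
    have im: "(\<lambda>v. {0,v}) ` A t \<subseteq> CR t"
    proof
      fix e assume "e \<in> (\<lambda>v. {0,v}) ` A t"
      then obtain v s where v: "e = {0,v}" "1 \<le> v" "v \<le> n" "s \<in> N - {t}" "v \<in> X s" "\<not> same_comp N ET t s r" unfolding A_def by auto
      have "{0,v} \<in> {{0, i} | i. 1 \<le> i \<and> i \<le> n}" using v(2,3) by (intro CollectI exI[of _ v]) simp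
      then have "{0,v} \<in> E" unfolding E by (rule UnI2)
      moreover have "{0,v} = {v, 0}" by (rule insert_commute)
      moreover have "r \<in> N - {t}" using r that by simp
      ultimately have "{0,v} \<in> CR t" unfolding CR_def using v(4,5,6) r(2) by blast
      then show "e \<in> CR t" using v(1) by simp
    qed
    have ij: "inj_on (\<lambda>v. {0,v}) (A t)" unfolding A_def inj_on_def by (auto simp: doubleton_eq_iff)
    have "card (A t) \<le> card (CR t)" by (rule card_inj_on_le[OF ij im finCR])
    then show ?thesis using crs[OF that(1)] crossCR by simp
  qed
  define b where "b v = (SOME t. t \<in> N \<and> v \<in> X t)" for v
  have b: "b v \<in> N \<and> v \<in> X (b v)" if "v \<le> n" for v
  proof -
    have "\<exists>t. t \<in> N \<and> v \<in> X t" using cover[OF that] by blast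
    then show ?thesis unfolding b_def by (rule someI_ex)
  qed
  have window: False if a1: "1 \<le> a" and an: "a + (2*k-1) \<le> n + 1"
      and noX: "\<And>v. a \<le> v \<Longrightarrow> v < a + (2*k-1) \<Longrightarrow> v \<notin> X r"
      and noC: "\<And>i. a \<le> i \<Longrightarrow> Suc i < a + (2*k-1) \<Longrightarrow> {i, Suc i} \<notin> CR r" for a
  proof -
    let ?W = "{a..<a + (2*k-1)}"
    have bW: "b v \<in> N - {r} \<and> v \<in> X (b v)" if "v \<in> ?W" for v
    proof -
      have "v \<le> n" using that an by auto
      then show ?thesis using b[of v] noX[of v] that by auto
    qed
    have aW: "a \<in> ?W" using k3 by simp
    have chain: "same_comp N ET r (b a) (b (a+d))" if "d < 2*k-1" for d
      using that
    proof (induction d)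
      case 0 show ?case using same_comp_refl[of "b a" N r ET] bW[OF aW] by simp
    next
      case (Suc d)
      then have IH: "same_comp N ET r (b a) (b (a+d))" by simp
      have nc: "{a+d, Suc (a+d)} \<notin> CR r" using noC Suc.prems by simp
      moreover have "{a+d, Suc(a+d)} \<in> E" unfolding E using a1 Suc.prems an by auto
      moreover have m1: "b (a+d) \<in> N - {r} \<and> a+d \<in> X (b (a+d))" using bW[of "a+d"] Suc.prems by simp
      moreover have m2: "b (Suc (a+d)) \<in> N - {r} \<and> Suc (a+d) \<in> X (b (Suc (a+d)))"
        using bW[of "Suc (a+d)"] Suc.prems by simp
      ultimately have "same_comp N ET r (b (a+d)) (b (Suc (a+d)))"
        unfolding CR_def by blast
      from same_comp_trans[OF IH this] show ?case by simp
    qed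
    have ba: "b a \<in> N - {r}" using bW[OF aW] by simp
    then have rb: "(r, b a) \<in> (adj_rel ET)\<^sup>*" using tree r unfolding is_tree_def connected_on_def by blast
    have bar: "b a \<noteq> r" using ba by simp
    have "\<exists>c. {r,c} \<in> ET \<and> c \<noteq> r \<and> (c, b a) \<in> (adj_rel {e\<in>ET. r \<notin> e})\<^sup>*"
      using exists_nbr[OF rb] bar by (elim disjE) simp_all
    then obtain c where c: "{r,c} \<in> ET" "c \<noteq> r" "(c, b a) \<in> (adj_rel {e\<in>ET. r \<notin> e})\<^sup>*"
      by blast
    have cN: "c \<in> N"
    proof -
      obtain x y where "{r,c} = {x,y}" "x \<in> N" "y \<in> N" using tree c(1) unfolding is_tree_def by blast
      then show ?thesis by (auto simp: doubleton_eq_iff)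
    qed
    have scc: "same_comp N ET r c (b a)" unfolding same_comp_def using c cN ba by blast
    have Wsub: "?W \<subseteq> X c \<union> A c"
    proof
      fix v assume vW: "v \<in> ?W"
      have "v - a < 2*k-1" using vW by auto
      from chain[OF this] have "same_comp N ET r (b a) (b v)" using vW by simp
      from same_comp_trans[OF scc this] have sv: "same_comp N ET r c (b v)" .
      show "v \<in> X c \<union> A c"
      proof (cases "b v = c")
        case True then show ?thesis using bW[OF vW] by simp
      next
        case False
        have "\<not> same_comp N ET c (b v) r" using sep[OF tree c(1) c(2) sv] by blast
        moreover have "v \<in> {1..n}" using vW a1 an by auto
        ultimately show ?thesis unfolding A_def using bW[OF vW] False by blast
      qed
    qed
    have finA: "finite (A c)" unfolding A_def by simp
    have "2*k-1 = card ?W" by simp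
    also have "\<dots> \<le> card (X c \<union> A c)" using Wsub finX[OF cN] finA by (intro card_mono) auto
    also have "\<dots> \<le> card (X c) + card (A c)" by (rule card_Un_le)
    also have "\<dots> \<le> (k-1) + (k-1)" using thick[OF cN] cardA[OF cN c(2)] by simp
    finally show False using k3 by simp
  qed
  define p where "p = 2*k-1"
  define m where "m = 2*k-2"
  have p0: "p > 0" using k3 unfolding p_def by simp
  define Good where "Good = {j. j < m \<and> (\<forall>v. j*p+1 \<le> v \<and> v < j*p+1+p \<longrightarrow> v \<notin> X r)}"
  define Bad where "Bad = {j. j < m \<and> \<not>(\<forall>v. j*p+1 \<le> v \<and> v < j*p+1+p \<longrightarrow> v \<notin> X r)}"
  have divj: "(v - 1) div p = j" if "j*p+1 \<le> v" "v < j*p+1+p" for v j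
    by (rule div_nat_eqI) (use that in \<open>auto simp: algebra_simps\<close>)
  have cBad: "card Bad \<le> k - 2"
  proof -
    have "Bad \<subseteq> (\<lambda>v. (v-1) div p) ` (X r - {0})"
    proof
      fix j assume "j \<in> Bad"
      then obtain v where v: "j*p+1 \<le> v" "v < j*p+1+p" "v \<in> X r" unfolding Bad_def by auto
      then have "(v-1) div p = j" using divj by blast
      moreover have "v \<in> X r - {0}" using v by auto
      ultimately show "j \<in> (\<lambda>v. (v-1) div p) ` (X r - {0})" by force
    qed
    then have "card Bad \<le> card ((\<lambda>v. (v-1) div p) ` (X r - {0}))"
      using finX[OF r(1)] by (intro card_mono) auto
    also have "\<dots> \<le> card (X r - {0})" by (rule card_image_le) (use finX[OF r(1)] in auto)
    also have "\<dots> = card (X r) - 1" using r by simp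
    also have "\<dots> \<le> k - 2" using thick[OF r(1)] by simp
    finally show ?thesis .
  qed
  have exi: "\<exists>i. j*p+1 \<le> i \<and> Suc i < j*p+1+p \<and> {i, Suc i} \<in> CR r" if "j \<in> Good" for j
  proof (rule ccontr)
    assume H: "\<not> ?thesis"
    have "Suc j * p \<le> m * p" using that unfolding Good_def by (intro mult_le_mono1) auto
    moreover have "m*p \<le> n" using nbig unfolding m_def p_def by simp
    ultimately have "j*p + p \<le> n" by simp
    then have an: "j*p+1 + (2*k-1) \<le> n + 1" unfolding p_def by simp
    have noX': "\<And>v. j*p+1 \<le> v \<Longrightarrow> v < j*p+1+(2*k-1) \<Longrightarrow> v \<notin> X r"
      using that unfolding Good_def p_def by blast
    have noC': "\<And>i. j*p+1 \<le> i \<Longrightarrow> Suc i < j*p+1+(2*k-1) \<Longrightarrow> {i,Suc i} \<notin> CR r"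
      using H unfolding p_def by blast
    show False by (rule window[of "j*p+1", OF _ an noX' noC']) simp
  qed
  define g where "g j = (SOME i. j*p+1 \<le> i \<and> Suc i < j*p+1+p \<and> {i, Suc i} \<in> CR r)" for j
  have g: "j*p+1 \<le> g j \<and> Suc (g j) < j*p+1+p \<and> {g j, Suc (g j)} \<in> CR r" if "j \<in> Good" for j
    unfolding g_def using someI_ex[OF exi[OF that]] .
  have cGood: "card Good \<le> k - 1"
  proof -
    have "inj_on (\<lambda>j. {g j, Suc (g j)}) Good"
    proof (rule inj_onI)
      fix j j' assume jj: "j \<in> Good" "j' \<in> Good" "{g j, Suc (g j)} = {g j', Suc (g j')}"
      then have "g j = g j'" by (auto simp: doubleton_eq_iff)
      moreover have "(g j - 1) div p = j" using g[OF jj(1)] divj by simp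
      moreover have "(g j' - 1) div p = j'" using g[OF jj(2)] divj by simp
      ultimately show "j = j'" by simp
    qed
    moreover have "(\<lambda>j. {g j, Suc (g j)}) ` Good \<subseteq> CR r" using g by auto
    ultimately have "card Good \<le> card (CR r)" using finCR[of r] by (metis card_inj_on_le)
    then show ?thesis using crs[OF r(1)] crossCR by simp
  qed
  have "{..<m} = Good \<union> Bad" unfolding Good_def Bad_def by auto
  then have "m \<le> card Good + card Bad" using card_Un_le by (metis card_lessThan)
  then show False using cGood cBad k3 unfolding m_def by simp
qed

theorem lemma3p16:
  fixes k :: nat
  assumes "k \<ge> 3"
  shows "k \<le> ecrw (fan (6 * k^2 - 6 * k - 1))"
proof -
  define n where "n = 6 * k^2 - 6 * k - 1"
  have nbig: "(2*k-2)*(2*k-1) \<le> n"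
  proof -
    obtain j where j: "k = j + 3" using assms by (metis le_iff_add add.commute)
    show ?thesis unfolding n_def j by (simp add: power2_eq_square algebra_simps)
  qed
  let ?S = "{w. \<exists>(N :: nat set) ET X. is_tcd (fan n) N ET X \<and> w = ec_width (fan n) N ET X}"
  have ne: "?S \<noteq> {}"
  proof -
    have "is_tcd (fan n) {0::nat} {} (\<lambda>_. {0..n})"
      unfolding is_tcd_def is_tree_def connected_on_def fan_def by auto
    then show ?thesis by blast
  qed
  have "k \<le> w" if "w \<in> ?S" for w
  proof (rule ccontr)
    assume "\<not> k \<le> w"
    then have wk: "w < k" by simp
    from that obtain N :: "nat set" and ET X where t: "is_tcd (fan n) N ET X" "w = ec_width (fan n) N ET X" by blast
    have finN: "finite N" using t(1) unfolding is_tcd_def is_tree_def by blast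
    have le: "max (cross (fan n) N ET X t) (card (X t)) \<le> w" if "t \<in> N" for t
      unfolding t(2) ec_width_def using finN that by (intro Max_ge) auto
    show False
      by (rule main[OF assms nbig t(1)]) (use le wk in \<open>fastforce+\<close>)
  qed
  then have "k \<le> Inf ?S" using ne by (intro cInf_greatest) auto
  then show ?thesis unfolding ecrw_def n_def by simp
qed

end
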